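(* Let $N$ be a finite group, let $\pi$ be the set of prime divisors of $|N|$, and assume that $\mathrm{Hol}(N)$ has a unique Hall $\pi$-subgroup $Q$. Let $G$ be a subgroup of $\mathrm{Hol}(N)$ and $H$ any subgroup of $G$. Then: (a) if $G$ is transitive, then $G\cap Q$ is also transitive; (b) if every prime factor of $[G:H]$ divides $|N|$, then $[G:H]=[G\cap Q:H\cap Q]$.
   Context: $\mathrm{Hol}(N)=N\rtimes\mathrm{Aut}(N)$ acts on $N$ by $(\eta,\alpha)\cdot x=\eta\,\alpha(x)$; a subgroup is transitive if it acts transitively on $N$. *)

theory Defs
  imports "HOL-Algebra.Algebra" "HOL-Computational_Algebra.Primes"
begin

text \<open>The holomorph Hol(N) = N \<rtimes> Aut(N), with elements (eta, alpha),
  eta in N, alpha an automorphism of N (as an extensional bijection of carrier N).\<close>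
definition hol :: "('a, 'b) monoid_scheme \<Rightarrow> ('a \<times> ('a \<Rightarrow> 'a)) monoid" where
  "hol N = \<lparr> carrier = carrier N \<times> auto N,
             monoid.mult = (\<lambda>(eta, alpha) (mu, beta).
                       (eta \<otimes>\<^bsub>N\<^esub> alpha mu, compose (carrier N) alpha beta)),
             one = (\<one>\<^bsub>N\<^esub>, (\<lambda>x\<in>carrier N. x)) \<rparr>"

definition hol_act :: "('a, 'b) monoid_scheme \<Rightarrow> ('a \<times> ('a \<Rightarrow> 'a)) \<Rightarrow> 'a \<Rightarrow> 'a" where
  "hol_act N g x = fst g \<otimes>\<^bsub>N\<^esub> (snd g) x"

definition transitive_on :: "('a, 'b) monoid_scheme \<Rightarrow> ('a \<times> ('a \<Rightarrow> 'a)) set \<Rightarrow> bool" where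
  "transitive_on N G \<longleftrightarrow> (\<forall>x\<in>carrier N. \<forall>y\<in>carrier N. \<exists>g\<in>G. hol_act N g x = y)"

definition prime_divs :: "nat \<Rightarrow> nat set" where
  "prime_divs n = {p. Factorial_Ring.prime (p::nat) \<and> p dvd n}"

definition hall_subgroup :: "nat set \<Rightarrow> ('c, 'd) monoid_scheme \<Rightarrow> 'c set \<Rightarrow> bool" where
  "hall_subgroup primes_set K Q \<longleftrightarrow> subgroup Q K \<and>
     (\<forall>p. Factorial_Ring.prime (p::nat) \<and> p dvd card Q \<longrightarrow> p \<in> primes_set) \<and>
     (\<forall>p. Factorial_Ring.prime (p::nat) \<and> p dvd (card (carrier K) div card Q) \<longrightarrow> p \<notin> primes_set)"

end

theory Submission
  imports Defs
begin

lemma hol_carrier: "carrier (hol N) = carrier N \<times> auto N" by (simp add: hol_def)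
lemma hol_one: "\<one>\<^bsub>hol N\<^esub> = (\<one>\<^bsub>N\<^esub>, (\<lambda>x\<in>carrier N. x))" by (simp add: hol_def)
lemma hol_mult: "(e, a) \<otimes>\<^bsub>hol N\<^esub> (m, b) = (e \<otimes>\<^bsub>N\<^esub> a m, compose (carrier N) a b)"
  by (simp add: hol_def)

context group begin

lemma auto_funcset: "a \<in> auto G \<Longrightarrow> a \<in> carrier G \<rightarrow> carrier G"
  by (simp add: auto_def Bij_imp_funcset)
lemma auto_ext: "a \<in> auto G \<Longrightarrow> a \<in> extensional (carrier G)"
  by (simp add: auto_def Bij_imp_extensional)
lemma auto_mult: "a \<in> auto G \<Longrightarrow> x \<in> carrier G \<Longrightarrow> y \<in> carrier G \<Longrightarrow> a (x \<otimes> y) = a x \<otimes> a y"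
  by (simp add: auto_def hom_def)
lemma auto_one: "a \<in> auto G \<Longrightarrow> a \<one> = \<one>"
proof -
  assume "a \<in> auto G"
  then have "group_hom G G a" by (simp add: group_hom_def group_hom_axioms_def group_axioms auto_def)
  then show ?thesis by (rule group_hom.hom_one)
qed
lemma auto_compose: "a \<in> auto G \<Longrightarrow> b \<in> auto G \<Longrightarrow> compose (carrier G) a b \<in> auto G"
proof -
  assume "a \<in> auto G" "b \<in> auto G"
  then have "a \<circ> b \<in> hom G G" "compose (carrier G) a b \<in> Bij (carrier G)"
    by (auto simp: auto_def compose_Bij hom_def Pi_iff)
  moreover have "compose (carrier G) a b \<in> hom G G"
    using calculation(1) unfolding hom_def compose_def by (auto simp: Pi_iff)
  ultimately show ?thesis by (simp add: auto_def)
qed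
lemma auto_inv: "a \<in> auto G \<Longrightarrow> restrict (inv_into (carrier G) a) (carrier G) \<in> auto G"
  by (simp add: auto_def restrict_inv_into_hom restrict_inv_into_Bij)

lemma group_hol: "group (hol G)"
proof (rule groupI)
  fix x y assume "x \<in> carrier (hol G)" "y \<in> carrier (hol G)"
  then obtain e a m b where x: "x = (e,a)" "e \<in> carrier G" "a \<in> auto G"
    and y: "y = (m,b)" "m \<in> carrier G" "b \<in> auto G" by (auto simp: hol_carrier)
  have "a m \<in> carrier G" using auto_funcset[OF x(3)] y(2) by (rule funcset_mem)
  then show "x \<otimes>\<^bsub>hol G\<^esub> y \<in> carrier (hol G)"
    using x y by (simp add: hol_carrier hol_mult auto_compose)
next
  show "\<one>\<^bsub>hol G\<^esub> \<in> carrier (hol G)" by (simp add: hol_carrier hol_one id_in_auto)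
next
  fix x y z assume "x \<in> carrier (hol G)" "y \<in> carrier (hol G)" "z \<in> carrier (hol G)"
  then obtain e a m b n c where x: "x = (e,a)" "e \<in> carrier G" "a \<in> auto G"
    and y: "y = (m,b)" "m \<in> carrier G" "b \<in> auto G"
    and z: "z = (n,c)" "n \<in> carrier G" "c \<in> auto G" by (auto simp: hol_carrier)
  have fa: "a \<in> carrier G \<rightarrow> carrier G" "b \<in> carrier G \<rightarrow> carrier G" "c \<in> carrier G \<rightarrow> carrier G"
    using x y z auto_funcset by auto
  show "(x \<otimes>\<^bsub>hol G\<^esub> y) \<otimes>\<^bsub>hol G\<^esub> z = x \<otimes>\<^bsub>hol G\<^esub> (y \<otimes>\<^bsub>hol G\<^esub> z)"
    proof -
    have bn: "b n \<in> carrier G" using fa z by auto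
    have am: "a m \<in> carrier G" using fa y by auto
    have abn: "a (b n) \<in> carrier G" using fa bn by auto
    have 1: "(e \<otimes> a m) \<otimes> compose (carrier G) a b n = e \<otimes> a (m \<otimes> b n)"
      using x y z bn am abn by (simp add: compose_def auto_mult m_assoc)
    have 2: "compose (carrier G) (compose (carrier G) a b) c = compose (carrier G) a (compose (carrier G) b c)"
      using fa by (simp add: compose_assoc)
    show ?thesis using x y z 1 2 by (simp add: hol_mult)
  qed
next
  fix x assume "x \<in> carrier (hol G)"
  then obtain e a where x: "x = (e,a)" "e \<in> carrier G" "a \<in> auto G" by (auto simp: hol_carrier)
  show "\<one>\<^bsub>hol G\<^esub> \<otimes>\<^bsub>hol G\<^esub> x = x"
    using x by (simp add: hol_one hol_mult Id_compose auto_funcset auto_ext)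
next
  fix x assume "x \<in> carrier (hol G)"
  then obtain e a where x: "x = (e,a)" "e \<in> carrier G" "a \<in> auto G" by (auto simp: hol_carrier)
  define a' where "a' = restrict (inv_into (carrier G) a) (carrier G)"
  have a': "a' \<in> auto G" using auto_inv x a'_def by simp
  have "compose (carrier G) a' a = (\<lambda>x\<in>carrier G. x)"
    using x a'_def by (simp add: auto_def Bij_compose_restrict_eq)
  moreover have "a' (inv e) \<otimes> a' e = \<one>"
    using a' x by (simp add: auto_mult[symmetric] auto_one)
  ultimately have "(a' (inv e), a') \<otimes>\<^bsub>hol G\<^esub> x = \<one>\<^bsub>hol G\<^esub>"
    using x by (simp add: hol_mult hol_one)
  moreover have "(a' (inv e), a') \<in> carrier (hol G)"
  proof -
    have "a' (inv e) \<in> carrier G" using auto_funcset[OF a'] x(2) by (simp add: funcset_mem)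
    then show ?thesis using a' by (simp add: hol_carrier)
  qed
  ultimately show "\<exists>y\<in>carrier (hol G). y \<otimes>\<^bsub>hol G\<^esub> x = \<one>\<^bsub>hol G\<^esub>" by blast
qed

lemma hol_finite: "finite (carrier G) \<Longrightarrow> finite (carrier (hol G))"
proof -
  assume f: "finite (carrier G)"
  have "auto G \<subseteq> carrier G \<rightarrow>\<^sub>E carrier G"
    using auto_funcset auto_ext unfolding PiE_def by blast
  then have "finite (auto G)" using f by (meson finite_PiE finite_subset)
  then show ?thesis using f by (simp add: hol_carrier)
qed

lemma hol_act_closed: "g \<in> carrier (hol G) \<Longrightarrow> x \<in> carrier G \<Longrightarrow> hol_act G g x \<in> carrier G"
proof -
  assume g: "g \<in> carrier (hol G)" and xc: "x \<in> carrier G"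
  then obtain e a where x: "g = (e,a)" "e \<in> carrier G" "a \<in> auto G" by (auto simp: hol_carrier)
  have "a x \<in> carrier G" using auto_funcset[OF x(3)] xc by (rule funcset_mem)
  then show ?thesis using x by (simp add: hol_act_def)
qed

lemma hol_act_fst: "g \<in> carrier (hol G) \<Longrightarrow> hol_act G g \<one> = fst g"
  by (auto simp: hol_act_def hol_carrier auto_one)

lemma hol_act_one: "x \<in> carrier G \<Longrightarrow> hol_act G \<one>\<^bsub>hol G\<^esub> x = x"
  by (simp add: hol_act_def hol_one)

lemma hol_act_mult: "g \<in> carrier (hol G) \<Longrightarrow> h \<in> carrier (hol G) \<Longrightarrow> x \<in> carrier G \<Longrightarrow>
   hol_act G (g \<otimes>\<^bsub>hol G\<^esub> h) x = hol_act G g (hol_act G h x)"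
proof -
  assume "g \<in> carrier (hol G)" "h \<in> carrier (hol G)" and xc: "x \<in> carrier G"
  then obtain e a m b where x: "g = (e,a)" "e \<in> carrier G" "a \<in> auto G"
    and y: "h = (m,b)" "m \<in> carrier G" "b \<in> auto G" by (auto simp: hol_carrier)
  have am: "a m \<in> carrier G" using auto_funcset[OF x(3)] y(2) by (rule funcset_mem)
  have bx: "b x \<in> carrier G" using auto_funcset[OF y(3)] xc by (rule funcset_mem)
  have abx: "a (b x) \<in> carrier G" using auto_funcset[OF x(3)] bx by (rule funcset_mem)
  show ?thesis using x y xc am bx abx
    by (simp add: hol_act_def hol_mult compose_def auto_mult m_assoc)
qed

end

lemma card_fibers:
  assumes "finite A" and "\<And>y. y \<in> f ` A \<Longrightarrow> card {x\<in>A. f x = y} = c"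
  shows "card A = card (f ` A) * c"
proof -
  have "A = (\<Union>y\<in>f ` A. {x\<in>A. f x = y})" by auto
  moreover have "card (\<Union>y\<in>f ` A. {x\<in>A. f x = y}) = (\<Sum>y\<in>f ` A. card {x\<in>A. f x = y})"
    by (rule card_UN_disjoint) (auto simp: assms(1))
  ultimately have "card A = (\<Sum>y\<in>f ` A. card {x\<in>A. f x = y})" by simp
  also have "\<dots> = (\<Sum>y\<in>f ` A. c)" using assms(2) by simp
  finally show ?thesis by simp
qed

context group begin

lemma prod_formula:
  assumes fin: "finite (carrier G)" and A: "subgroup A G" and B: "subgroup B G"
  shows "card (A <#> B) * card (A \<inter> B) = card A * card B"
proof -
  let ?f = "\<lambda>(a,b). a \<otimes> b"
  have AB: "A \<subseteq> carrier G" "B \<subseteq> carrier G" using A B subgroup.subset by auto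
  have img: "?f ` (A \<times> B) = A <#> B" by (auto simp: set_mult_def)
  have finAB: "finite (A \<times> B)" using AB fin by (meson finite_SigmaI finite_subset)
  have "card (A \<times> B) = card (?f ` (A \<times> B)) * card (A \<inter> B)"
  proof (rule card_fibers[OF finAB])
    fix z assume "z \<in> ?f ` (A \<times> B)"
    then obtain a0 b0 where ab0: "a0 \<in> A" "b0 \<in> B" "z = a0 \<otimes> b0" by auto
    have c0: "a0 \<in> carrier G" "b0 \<in> carrier G" using ab0 AB by auto
    let ?g = "\<lambda>t. (a0 \<otimes> t, inv t \<otimes> b0)"
    let ?h = "\<lambda>p. inv a0 \<otimes> fst p"
    have "bij_betw ?g (A \<inter> B) {x \<in> A \<times> B. ?f x = z}"
    proof (rule bij_betw_byWitness[where f'="?h"])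
      show "\<forall>t\<in>A \<inter> B. ?h (?g t) = t" using c0 AB by (auto simp: m_assoc[symmetric])
      show "\<forall>p\<in>{x \<in> A \<times> B. ?f x = z}. ?g (?h p) = p"
      proof
        fix p assume p: "p \<in> {x \<in> A \<times> B. ?f x = z}"
        then obtain a b where pab: "p = (a,b)" "a \<in> A" "b \<in> B" "a \<otimes> b = a0 \<otimes> b0" using ab0 by auto
        have c: "a \<in> carrier G" "b \<in> carrier G" using pab AB by auto
        have "inv (inv a0 \<otimes> a) \<otimes> b0 = inv a \<otimes> (a0 \<otimes> b0)"
          using c c0 by (simp add: inv_mult_group m_assoc)
        also have "\<dots> = inv a \<otimes> (a \<otimes> b)" using pab by simp
        also have "\<dots> = b" using c by (simp add: m_assoc[symmetric])
        finally show "?g (?h p) = p" using pab c c0 by (simp add: m_assoc[symmetric])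
      qed
      show "?g ` (A \<inter> B) \<subseteq> {x \<in> A \<times> B. ?f x = z}"
      proof
        fix q assume "q \<in> ?g ` (A \<inter> B)"
        then obtain t where t: "t \<in> A" "t \<in> B" "q = ?g t" by auto
        have tc: "t \<in> carrier G" using t AB by auto
        have "a0 \<otimes> t \<in> A" using A ab0 t by (simp add: subgroup.m_closed)
        moreover have "inv t \<otimes> b0 \<in> B" using B ab0 t by (simp add: subgroup.m_closed subgroup.m_inv_closed)
        moreover have "(a0 \<otimes> t) \<otimes> (inv t \<otimes> b0) = z" using ab0 c0 tc by (simp add: m_assoc[symmetric]) (simp add: m_assoc)
        ultimately show "q \<in> {x \<in> A \<times> B. ?f x = z}" using t by simp
      qed
      show "?h ` {x \<in> A \<times> B. ?f x = z} \<subseteq> A \<inter> B"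
      proof
        fix q assume "q \<in> ?h ` {x \<in> A \<times> B. ?f x = z}"
        then obtain a b where pab: "q = inv a0 \<otimes> a" "a \<in> A" "b \<in> B" "a \<otimes> b = a0 \<otimes> b0" using ab0 by auto
        have c: "a \<in> carrier G" "b \<in> carrier G" using pab AB by auto
        have "inv a0 \<otimes> a = b0 \<otimes> inv b"
        proof -
          have e: "inv a0 \<otimes> (a \<otimes> b) \<otimes> inv b = inv a0 \<otimes> (a0 \<otimes> b0) \<otimes> inv b" using pab by simp
          have l: "inv a0 \<otimes> (a \<otimes> b) \<otimes> inv b = inv a0 \<otimes> a" using c c0 by (simp add: m_assoc)
          have r: "inv a0 \<otimes> (a0 \<otimes> b0) \<otimes> inv b = b0 \<otimes> inv b" using c c0 by (simp add: m_assoc[symmetric])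
          show ?thesis using e l r by simp
        qed
        moreover have "inv a0 \<otimes> a \<in> A" using A ab0 pab by (simp add: subgroup.m_closed subgroup.m_inv_closed)
        moreover have "b0 \<otimes> inv b \<in> B" using B ab0 pab by (simp add: subgroup.m_closed subgroup.m_inv_closed)
        ultimately show "q \<in> A \<inter> B" using pab by simp
      qed
    qed
    then show "card {x \<in> A \<times> B. ?f x = z} = card (A \<inter> B)" by (simp add: bij_betw_same_card)
  qed
  then show ?thesis using img by (simp add: card_cartesian_product)
qed

lemma sub_card_dvd:
  assumes "subgroup A G" "subgroup B G" "A \<subseteq> B"
  shows "card A dvd card B"
proof -
  interpret B: group "G\<lparr>carrier := B\<rparr>" using assms(2) by (rule subgroup_imp_group)
  have "subgroup A (G\<lparr>carrier := B\<rparr>)" using subgroup_incl assms by blast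
  then have "card (rcosets\<^bsub>G\<lparr>carrier := B\<rparr>\<^esub> A) * card A = order (G\<lparr>carrier := B\<rparr>)" by (rule B.lagrange)
  moreover have "order (G\<lparr>carrier := B\<rparr>) = card B" by (simp add: order_def)
  ultimately show ?thesis by (metis dvd_triv_right)
qed

end

context group begin

lemma hol_fst_mult_one:
  assumes "g \<in> carrier (hol G)" "h \<in> carrier (hol G)" "fst h = \<one>"
  shows "fst (g \<otimes>\<^bsub>hol G\<^esub> h) = fst g"
proof -
  interpret K: group "hol G" by (rule group_hol)
  have "fst (g \<otimes>\<^bsub>hol G\<^esub> h) = hol_act G (g \<otimes>\<^bsub>hol G\<^esub> h) \<one>"
    using assms by (simp add: hol_act_fst)
  also have "\<dots> = hol_act G g (hol_act G h \<one>)" using assms by (simp add: hol_act_mult)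
  also have "\<dots> = fst g" using assms by (simp add: hol_act_fst)
  finally show ?thesis .
qed

lemma hol_fst_inv_mult:
  assumes "g \<in> carrier (hol G)" "h \<in> carrier (hol G)" "fst h = fst g"
  shows "fst (inv\<^bsub>hol G\<^esub> g \<otimes>\<^bsub>hol G\<^esub> h) = \<one>"
proof -
  interpret K: group "hol G" by (rule group_hol)
  have ig: "inv\<^bsub>hol G\<^esub> g \<in> carrier (hol G)" using assms by simp
  have "fst (inv\<^bsub>hol G\<^esub> g \<otimes>\<^bsub>hol G\<^esub> h) = hol_act G (inv\<^bsub>hol G\<^esub> g \<otimes>\<^bsub>hol G\<^esub> h) \<one>"
    using assms ig by (simp add: hol_act_fst)
  also have "\<dots> = hol_act G (inv\<^bsub>hol G\<^esub> g) (hol_act G h \<one>)" using assms ig by (simp add: hol_act_mult)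
  also have "\<dots> = hol_act G (inv\<^bsub>hol G\<^esub> g) (hol_act G g \<one>)" using assms by (simp add: hol_act_fst)
  also have "\<dots> = hol_act G (inv\<^bsub>hol G\<^esub> g \<otimes>\<^bsub>hol G\<^esub> g) \<one>"
    by (rule hol_act_mult[symmetric]) (use assms ig in auto)
  also have "\<dots> = \<one>" using assms by (simp add: hol_act_one)
  finally show ?thesis .
qed

lemma stab_subgroup:
  assumes S: "subgroup S (hol G)"
  shows "subgroup {g\<in>S. fst g = \<one>} (hol G)"
proof -
  interpret K: group "hol G" by (rule group_hol)
  have sub: "S \<subseteq> carrier (hol G)" using S subgroup.subset by blast
  show ?thesis
  proof (rule K.subgroupI)
    show "{g \<in> S. fst g = \<one>} \<subseteq> carrier (hol G)" using sub by auto
    show "{g \<in> S. fst g = \<one>} \<noteq> {}"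
      using S subgroup.one_closed[OF S] by (auto simp: hol_one intro!: exI[of _ "\<one>\<^bsub>hol G\<^esub>"])
  next
    fix g assume g: "g \<in> {g \<in> S. fst g = \<one>}"
    then have gc: "g \<in> carrier (hol G)" using sub by auto
    have "fst (inv\<^bsub>hol G\<^esub> g \<otimes>\<^bsub>hol G\<^esub> \<one>\<^bsub>hol G\<^esub>) = \<one>"
    proof (rule hol_fst_inv_mult)
      show "fst \<one>\<^bsub>hol G\<^esub> = fst g" using g by (simp add: hol_one)
    qed (use gc in auto)
    then show "inv\<^bsub>hol G\<^esub> g \<in> {g \<in> S. fst g = \<one>}" using g gc S
      by (simp add: subgroup.m_inv_closed)
  next
    fix g h assume g: "g \<in> {g \<in> S. fst g = \<one>}" and h: "h \<in> {g \<in> S. fst g = \<one>}"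
    then have "fst (g \<otimes>\<^bsub>hol G\<^esub> h) = \<one>" using sub by (subst hol_fst_mult_one) auto
    then show "g \<otimes>\<^bsub>hol G\<^esub> h \<in> {g \<in> S. fst g = \<one>}" using g h S by (simp add: subgroup.m_closed)
  qed
qed

lemma orbit_stab:
  assumes fin: "finite (carrier G)" and S: "subgroup S (hol G)"
  shows "card S = card (fst ` S) * card {g\<in>S. fst g = \<one>}"
proof -
  interpret K: group "hol G" by (rule group_hol)
  have sub: "S \<subseteq> carrier (hol G)" using S subgroup.subset by blast
  have finS: "finite S" using sub hol_finite[OF fin] finite_subset by blast
  show ?thesis
  proof (rule card_fibers[OF finS])
    fix y assume "y \<in> fst ` S"
    then obtain g0 where g0: "g0 \<in> S" "fst g0 = y" by auto
    have g0c: "g0 \<in> carrier (hol G)" using g0 sub by auto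
    have "bij_betw (\<lambda>h. g0 \<otimes>\<^bsub>hol G\<^esub> h) {g\<in>S. fst g = \<one>} {x \<in> S. fst x = y}"
    proof (rule bij_betw_byWitness[where f'="\<lambda>g. inv\<^bsub>hol G\<^esub> g0 \<otimes>\<^bsub>hol G\<^esub> g"])
      show "\<forall>a\<in>{g \<in> S. fst g = \<one>}. inv\<^bsub>hol G\<^esub> g0 \<otimes>\<^bsub>hol G\<^esub> (g0 \<otimes>\<^bsub>hol G\<^esub> a) = a"
        using sub g0c by (auto simp: K.m_assoc[symmetric])
      show "\<forall>a'\<in>{x \<in> S. fst x = y}. g0 \<otimes>\<^bsub>hol G\<^esub> (inv\<^bsub>hol G\<^esub> g0 \<otimes>\<^bsub>hol G\<^esub> a') = a'"
        using sub g0c by (auto simp: K.m_assoc[symmetric])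
      show "(\<lambda>h. g0 \<otimes>\<^bsub>hol G\<^esub> h) ` {g \<in> S. fst g = \<one>} \<subseteq> {x \<in> S. fst x = y}"
        using sub g0 g0c S by (auto simp: hol_fst_mult_one subgroup.m_closed)
      show "(\<lambda>g. inv\<^bsub>hol G\<^esub> g0 \<otimes>\<^bsub>hol G\<^esub> g) ` {x \<in> S. fst x = y} \<subseteq> {g \<in> S. fst g = \<one>}"
        using sub g0 g0c S by (auto simp: hol_fst_inv_mult subgroup.m_closed subgroup.m_inv_closed)
    qed
    then show "card {x \<in> S. fst x = y} = card {g\<in>S. fst g = \<one>}" by (simp add: bij_betw_same_card)
  qed
qed

end

lemma arith_core:
  fixes cQ cK PG PH a b g h n :: nat
  assumes e1: "PG * a = cQ * g" and e2: "PH * b = cQ * h"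
    and d1: "cQ dvd PG" and d2: "cQ dvd PH" and d3: "PH dvd PG" and d4: "PG dvd cK"
    and d5: "b dvd a" and pos: "cQ > 0" "b > 0" "h > 0"
    and pr1: "\<forall>p. Factorial_Ring.prime p \<and> p dvd (g div h) \<longrightarrow> p dvd n"
    and pr2: "\<forall>p. Factorial_Ring.prime p \<and> p dvd (cK div cQ) \<longrightarrow> \<not> p dvd n"
  shows "g div h = a div b"
proof -
  obtain m where m: "PG = cQ * m" using d1 by (auto elim: dvdE)
  obtain m' where m': "PH = cQ * m'" using d2 by (auto elim: dvdE)
  have g: "g = m * a" using e1 m pos by (simp add: mult.assoc)
  have h: "h = m' * b" using e2 m' pos by (simp add: mult.assoc)
  have "m' dvd m" using d3 m m' pos by simp
  then obtain t where t: "m = m' * t" by (auto elim: dvdE)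
  obtain s where s: "a = b * s" using d5 by (auto elim: dvdE)
  have gh: "g = h * (t * s)" using g h t s by (simp add: ac_simps)
  have gdiv: "g div h = t * s" using gh pos by simp
  have ab: "a div b = s" using s pos by simp
  obtain k where k: "cK = PG * k" using d4 by (auto elim: dvdE)
  have ck: "cK div cQ = m * k" using k m pos by (simp add: mult.assoc)
  have "t = 1"
  proof (rule ccontr)
    assume "t \<noteq> 1"
    then obtain p where p: "Factorial_Ring.prime p" "p dvd t" using prime_factor_nat by blast
    have "p dvd g div h" using p gdiv by simp
    then have "p dvd n" using pr1 p by blast
    moreover have "p dvd cK div cQ" using p ck t by simp
    ultimately show False using pr2 p by blast
  qed
  then show ?thesis using gdiv ab by simp
qed

lemma hall_normal:
  assumes K: "group K" and fin: "finite (carrier K)" and hall: "hall_subgroup P K Q"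
    and uniq: "\<forall>Q'. hall_subgroup P K Q' \<longrightarrow> Q' = Q"
  shows "Q \<lhd> K"
proof -
  interpret K: group K by (rule K)
  have sQ: "subgroup Q K" using hall by (simp add: hall_subgroup_def)
  have subQ: "Q \<subseteq> carrier K" using sQ subgroup.subset by blast
  show ?thesis unfolding K.normal_inv_iff
  proof (intro conjI ballI sQ)
    fix x h assume x: "x \<in> carrier K" and h: "h \<in> Q"
    define Q' where "Q' = x <#\<^bsub>K\<^esub> Q #>\<^bsub>K\<^esub> inv\<^bsub>K\<^esub> x"
    have "subgroup (inv\<^bsub>K\<^esub> (inv\<^bsub>K\<^esub> x) <#\<^bsub>K\<^esub> Q #>\<^bsub>K\<^esub> inv\<^bsub>K\<^esub> x) K"
      using x sQ by (intro K.subgroup_conjugation_is_surj1) auto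
    then have sQ': "subgroup Q' K" using x by (simp add: Q'_def)
    have img: "Q' = (\<lambda>q. x \<otimes>\<^bsub>K\<^esub> q \<otimes>\<^bsub>K\<^esub> inv\<^bsub>K\<^esub> x) ` Q"
      unfolding Q'_def l_coset_def r_coset_def by auto
    have inj: "inj_on (\<lambda>q. x \<otimes>\<^bsub>K\<^esub> q \<otimes>\<^bsub>K\<^esub> inv\<^bsub>K\<^esub> x) Q"
    proof (rule inj_onI)
      fix a b assume "a \<in> Q" "b \<in> Q" "x \<otimes>\<^bsub>K\<^esub> a \<otimes>\<^bsub>K\<^esub> inv\<^bsub>K\<^esub> x = x \<otimes>\<^bsub>K\<^esub> b \<otimes>\<^bsub>K\<^esub> inv\<^bsub>K\<^esub> x"
      then show "a = b" using K.conjugation_is_inj[OF x] subQ by blast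
    qed
    have "card Q' = card Q" using img inj by (simp add: card_image)
    then have "hall_subgroup P K Q'" using hall sQ' by (simp add: hall_subgroup_def)
    then have "Q' = Q" using uniq by blast
    moreover have "x \<otimes>\<^bsub>K\<^esub> h \<otimes>\<^bsub>K\<^esub> inv\<^bsub>K\<^esub> x \<in> Q'" using img h by blast
    ultimately show "x \<otimes>\<^bsub>K\<^esub> h \<otimes>\<^bsub>K\<^esub> inv\<^bsub>K\<^esub> x \<in> Q" by simp
  qed
qed


lemma part_b:
  fixes N :: "('a, 'b) monoid_scheme" and Q G H :: "('a \<times> ('a \<Rightarrow> 'a)) set"
  assumes N: "group N" and fin: "finite (carrier N)"
    and hall: "hall_subgroup (prime_divs (order N)) (hol N) Q"
    and nQ: "Q \<lhd> hol N"
    and sG: "subgroup G (hol N)" and sH: "subgroup H (hol N)" and HG: "H \<subseteq> G"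
    and pr: "\<forall>p. Factorial_Ring.prime (p::nat) \<and> p dvd (card G div card H) \<longrightarrow> p dvd order N"
  shows "card G div card H = card (G \<inter> Q) div card (H \<inter> Q)"
proof -
  interpret N: group N by (rule N)
  interpret K: group "hol N" by (rule N.group_hol)
  have finK: "finite (carrier (hol N))" using fin by (rule N.hol_finite)
  have sQ: "subgroup Q (hol N)" using hall by (simp add: hall_subgroup_def)
  have hp: "\<forall>p. Factorial_Ring.prime (p::nat) \<and> p dvd (card (carrier (hol N)) div card Q) \<longrightarrow> \<not> p dvd order N"
    using hall by (auto simp: hall_subgroup_def prime_divs_def)
  have fins: "finite S" if "subgroup S (hol N)" for S
    using that finK subgroup.subset finite_subset by blast
  have cpos: "card S > 0" if "subgroup S (hol N)" for S
    using fins[OF that] subgroup.one_closed[OF that] card_gt_0_iff by blast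
  have sGQ: "subgroup (G \<inter> Q) (hol N)" using sG sQ by (rule K.subgroups_Inter_pair)
  have sHQ: "subgroup (H \<inter> Q) (hol N)" using sH sQ by (rule K.subgroups_Inter_pair)
  have si: "second_isomorphism_grp Q (hol N) S" if "subgroup S (hol N)" for S
    unfolding second_isomorphism_grp_def second_isomorphism_grp_axioms_def using nQ that by auto
  have sPG: "subgroup (Q <#>\<^bsub>hol N\<^esub> G) (hol N)"
    using second_isomorphism_grp.normal_set_mult_subgroup[OF si[OF sG]] .
  have sPH: "subgroup (Q <#>\<^bsub>hol N\<^esub> H) (hol N)"
    using second_isomorphism_grp.normal_set_mult_subgroup[OF si[OF sH]] .
  have e1: "card (Q <#>\<^bsub>hol N\<^esub> G) * card (Q \<inter> G) = card Q * card G"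
    by (rule K.prod_formula[OF finK sQ sG])
  have e2: "card (Q <#>\<^bsub>hol N\<^esub> H) * card (Q \<inter> H) = card Q * card H"
    by (rule K.prod_formula[OF finK sQ sH])
  have QsubP: "Q \<subseteq> Q <#>\<^bsub>hol N\<^esub> S" if "subgroup S (hol N)" for S
  proof
    fix q assume q: "q \<in> Q"
    then have "q = q \<otimes>\<^bsub>hol N\<^esub> \<one>\<^bsub>hol N\<^esub>" using sQ subgroup.subset by fastforce
    then show "q \<in> Q <#>\<^bsub>hol N\<^esub> S" using q subgroup.one_closed[OF that]
      unfolding set_mult_def by blast
  qed
  have PHG: "Q <#>\<^bsub>hol N\<^esub> H \<subseteq> Q <#>\<^bsub>hol N\<^esub> G" using HG unfolding set_mult_def by blast
  have d1: "card Q dvd card (Q <#>\<^bsub>hol N\<^esub> G)" by (rule K.sub_card_dvd[OF sQ sPG QsubP[OF sG]])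
  have d2: "card Q dvd card (Q <#>\<^bsub>hol N\<^esub> H)" by (rule K.sub_card_dvd[OF sQ sPH QsubP[OF sH]])
  have d3: "card (Q <#>\<^bsub>hol N\<^esub> H) dvd card (Q <#>\<^bsub>hol N\<^esub> G)" by (rule K.sub_card_dvd[OF sPH sPG PHG])
  have d4: "card (Q <#>\<^bsub>hol N\<^esub> G) dvd card (carrier (hol N))"
    by (rule K.sub_card_dvd[OF sPG K.subgroup_self subgroup.subset[OF sPG]])
  have d5: "card (H \<inter> Q) dvd card (G \<inter> Q)" using HG by (intro K.sub_card_dvd[OF sHQ sGQ]) auto
  show ?thesis
  proof (rule arith_core[OF _ _ d1 d2 d3 d4 d5 cpos[OF sQ] cpos[OF sHQ] cpos[OF sH] pr hp])
    show "card (Q <#>\<^bsub>hol N\<^esub> G) * card (G \<inter> Q) = card Q * card G" using e1 by (simp add: Int_commute)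
    show "card (Q <#>\<^bsub>hol N\<^esub> H) * card (H \<inter> Q) = card Q * card H" using e2 by (simp add: Int_commute)
  qed
qed


theorem lemma2p1:
  fixes N :: "('a, 'b) monoid_scheme"
    and Q G H :: "('a \<times> ('a \<Rightarrow> 'a)) set"
  assumes "group N" and "finite (carrier N)"
    and "hall_subgroup (prime_divs (order N)) (hol N) Q"
    and "\<forall>Q'. hall_subgroup (prime_divs (order N)) (hol N) Q' \<longrightarrow> Q' = Q"
    and "subgroup G (hol N)" and "subgroup H (hol N)" and "H \<subseteq> G"
  shows "(transitive_on N G \<longrightarrow> transitive_on N (G \<inter> Q))
       \<and> ((\<forall>p. Factorial_Ring.prime (p::nat) \<and> p dvd (card G div card H) \<longrightarrow> p dvd order N)
           \<longrightarrow> card G div card H = card (G \<inter> Q) div card (H \<inter> Q))"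
proof -
  note N = assms(1) and fin = assms(2) and hall = assms(3) and uniq = assms(4)
    and sG = assms(5) and sH = assms(6) and HG = assms(7)
  interpret N: group N by (rule N)
  interpret K: group "hol N" by (rule N.group_hol)
  have finK: "finite (carrier (hol N))" using fin by (rule N.hol_finite)
  have nQ: "Q \<lhd> hol N" by (rule hall_normal[OF N.group_hol finK hall uniq])
  have sQ: "subgroup Q (hol N)" using hall by (simp add: hall_subgroup_def)
  have fins: "finite S" if "subgroup S (hol N)" for S
    using that finK subgroup.subset finite_subset by blast
  have cpos: "card S > 0" if "subgroup S (hol N)" for S
    using fins[OF that] subgroup.one_closed[OF that] card_gt_0_iff by blast
  have fstC: "fst g \<in> carrier N" if "g \<in> S" "subgroup S (hol N)" for g S
    using that subgroup.subset[OF that(2)] by (auto simp: hol_carrier)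
  have A: "transitive_on N G \<longrightarrow> transitive_on N (G \<inter> Q)"
  proof
    assume tr: "transitive_on N G"
    define St where "St = {g\<in>G. fst g = \<one>\<^bsub>N\<^esub>}"
    have sSt: "subgroup St (hol N)" unfolding St_def by (rule N.stab_subgroup[OF sG])
    have StG: "St \<subseteq> G" by (auto simp: St_def)
    have fG: "fst ` G = carrier N"
    proof
      show "fst ` G \<subseteq> carrier N" using fstC sG by blast
      show "carrier N \<subseteq> fst ` G"
      proof
        fix y assume y: "y \<in> carrier N"
        then obtain g where g: "g \<in> G" "hol_act N g \<one>\<^bsub>N\<^esub> = y"
          using tr unfolding transitive_on_def by blast
        then have "fst g = y" using subgroup.subset[OF sG] by (simp add: N.hol_act_fst subsetD)
        then show "y \<in> fst ` G" using g by blast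
      qed
    qed
    have "card G = order N * card St"
      using N.orbit_stab[OF fin sG] fG by (simp add: St_def order_def)
    then have idx: "card G div card St = order N" using cpos[OF sSt] by simp
    have "card G div card St = card (G \<inter> Q) div card (St \<inter> Q)"
      by (rule part_b[OF N fin hall nQ sG sSt StG]) (simp add: idx)
    then have idx2: "card (G \<inter> Q) div card (St \<inter> Q) = order N" using idx by simp
    have sGQ: "subgroup (G \<inter> Q) (hol N)" using sG sQ by (rule K.subgroups_Inter_pair)
    have sStQ: "subgroup (St \<inter> Q) (hol N)" using sSt sQ by (rule K.subgroups_Inter_pair)
    have "card (G \<inter> Q) = card (fst ` (G \<inter> Q)) * card {g\<in>G \<inter> Q. fst g = \<one>\<^bsub>N\<^esub>}"
      by (rule N.orbit_stab[OF fin sGQ])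
    moreover have "{g\<in>G \<inter> Q. fst g = \<one>\<^bsub>N\<^esub>} = St \<inter> Q" by (auto simp: St_def)
    ultimately have "card (fst ` (G \<inter> Q)) = order N" using idx2 cpos[OF sStQ] by simp
    moreover have sub: "fst ` (G \<inter> Q) \<subseteq> carrier N" using fstC sGQ by blast
    ultimately have fGQ: "fst ` (G \<inter> Q) = carrier N"
      using fin by (intro card_subset_eq) (auto simp: order_def)
    show "transitive_on N (G \<inter> Q)" unfolding transitive_on_def
    proof (intro ballI)
      fix x y assume x: "x \<in> carrier N" and y: "y \<in> carrier N"
      obtain g1 where g1: "g1 \<in> G \<inter> Q" "fst g1 = x" using x fGQ by (metis imageE)
      obtain g2 where g2: "g2 \<in> G \<inter> Q" "fst g2 = y" using y fGQ by (metis imageE)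
      have c1: "g1 \<in> carrier (hol N)" and c2: "g2 \<in> carrier (hol N)"
        using g1 g2 subgroup.subset[OF sGQ] by auto
      have ic1: "inv\<^bsub>hol N\<^esub> g1 \<in> carrier (hol N)" using c1 by simp
      let ?g = "g2 \<otimes>\<^bsub>hol N\<^esub> inv\<^bsub>hol N\<^esub> g1"
      have gin: "?g \<in> G \<inter> Q"
        by (rule subgroup.m_closed[OF sGQ g2(1) subgroup.m_inv_closed[OF sGQ g1(1)]])
      have "hol_act N (inv\<^bsub>hol N\<^esub> g1) x = hol_act N (inv\<^bsub>hol N\<^esub> g1) (hol_act N g1 \<one>\<^bsub>N\<^esub>)"
        using g1 c1 by (simp add: N.hol_act_fst)
      also have "\<dots> = hol_act N (inv\<^bsub>hol N\<^esub> g1 \<otimes>\<^bsub>hol N\<^esub> g1) \<one>\<^bsub>N\<^esub>"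
        by (rule N.hol_act_mult[symmetric]) (use c1 ic1 in auto)
      also have "\<dots> = \<one>\<^bsub>N\<^esub>" using c1 by (simp add: N.hol_act_one)
      finally have i1: "hol_act N (inv\<^bsub>hol N\<^esub> g1) x = \<one>\<^bsub>N\<^esub>" .
      have "hol_act N ?g x = hol_act N g2 (hol_act N (inv\<^bsub>hol N\<^esub> g1) x)"
        by (rule N.hol_act_mult) (use c2 ic1 x in auto)
      also have "\<dots> = y" using i1 g2 c2 by (simp add: N.hol_act_fst)
      finally show "\<exists>g\<in>G \<inter> Q. hol_act N g x = y" using gin by blast
    qed
  qed
  have B: "(\<forall>p. Factorial_Ring.prime (p::nat) \<and> p dvd (card G div card H) \<longrightarrow> p dvd order N)
           \<longrightarrow> card G div card H = card (G \<inter> Q) div card (H \<inter> Q)"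
    using part_b[OF N fin hall nQ sG sH HG] by blast
  show ?thesis using A B by blast
qed

end
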